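(* Let $G(\circ)$, $G(\ast)$ be groups on a set $G$ of size $n$ and $a\in G$ with $\mathrm{dist}_a=2$. Then $\{|a|_\circ,|a|_\ast\}=\{n,n/2\}$.
   Context: $|a|_\circ$, $|a|_\ast$ are the orders of $a$ in $G(\circ)$, $G(\ast)$. $\mathrm{dist}_a=|\{b\in G: a\circ b\ne a\ast b\}|$. *)

theory Defs
  imports "HOL-Algebra.Multiplicative_Group"
begin

definition dist_elem :: "('a, 'b) monoid_scheme \<Rightarrow> ('a, 'c) monoid_scheme \<Rightarrow> 'a \<Rightarrow> nat" where
  "dist_elem G1 G2 a = card {b \<in> carrier G1. a \<otimes>\<^bsub>G1\<^esub> b \<noteq> a \<otimes>\<^bsub>G2\<^esub> b}"

end

theory Submission imports Defs begin

lemma dvd_lt_False: "(k::nat) dvd t \<Longrightarrow> 0 < t \<Longrightarrow> t < k \<Longrightarrow> False"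
  using dvd_imp_le not_le by blast

locale perm_setup =
  fixes C :: "'a set" and f g :: "'a \<Rightarrow> 'a" and k m :: nat and b1 b2 :: 'a
  assumes fin: "finite C" and fC: "\<And>x. x \<in> C \<Longrightarrow> f x \<in> C"
    and gC: "\<And>x. x \<in> C \<Longrightarrow> g x \<in> C"
    and injf: "inj_on f C" and injg: "inj_on g C"
    and Pf: "\<And>x j. x \<in> C \<Longrightarrow> (f^^j) x = x \<longleftrightarrow> k dvd j"
    and Pg: "\<And>x j. x \<in> C \<Longrightarrow> (g^^j) x = x \<longleftrightarrow> m dvd j"
    and kpos: "0 < k" and mpos: "0 < m"
    and b1C: "b1 \<in> C" and b2C: "b2 \<in> C" and b12: "b1 \<noteq> b2"
    and D: "\<And>b. b \<in> C \<Longrightarrow> f b \<noteq> g b \<longleftrightarrow> b = b1 \<or> b = b2"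
    and gb1: "g b1 = f b2" and gb2: "g b2 = f b1"
begin

lemma fclosed: "x \<in> C \<Longrightarrow> (f^^j) x \<in> C"
  by (induction j) (auto intro: fC)

lemma gclosed: "x \<in> C \<Longrightarrow> (g^^j) x \<in> C"
  by (induction j) (auto intro: gC)

lemma fmod: assumes "x \<in> C" shows "(f^^j) x = (f^^(j mod k)) x"
proof -
  have "(f^^(k * (j div k))) x = x" using Pf[OF assms] by simp
  hence "(f^^(j mod k)) ((f^^(k * (j div k))) x) = (f^^(j mod k)) x" by simp
  moreover have "j = j mod k + k * (j div k)" by simp
  ultimately show ?thesis by (metis funpow_add comp_apply)
qed

lemma frev: assumes "x \<in> C" "(f^^i) x = y" shows "(f^^(k - i mod k)) y = x"
proof -
  have "(f^^(k - i mod k)) y = (f^^(k - i mod k)) ((f^^(i mod k)) x)"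
    using fmod[OF assms(1), of i] assms(2) by simp
  also have "\<dots> = (f^^(k - i mod k + i mod k)) x" by (simp add: funpow_add)
  also have "k - i mod k + i mod k = k" using kpos
    by (simp add: less_imp_le_nat)
  finally show ?thesis using Pf[OF assms(1), of k] by simp
qed

lemma flt: assumes "x \<in> C" "r < s" "s < k" "(f^^r) x = (f^^s) x" shows False
proof -
  have ks: "k - s + s = k" using assms(3) by simp
  have "(f^^(k - s)) ((f^^s) x) = (f^^(k - s + s)) x" by (simp only: funpow_add comp_apply)
  also have "\<dots> = (f^^k) x" by (simp only: ks)
  also have "\<dots> = x" using Pf[OF assms(1), of k] by simp
  finally have 1: "(f^^(k - s)) ((f^^s) x) = x" .
  have "(f^^(k - s + r)) x = (f^^(k - s)) ((f^^r) x)" by (simp only: funpow_add comp_apply)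
  also have "\<dots> = x" using 1 assms(4) by (simp only:)
  finally have "(f^^(k - s + r)) x = x" .
  hence "k dvd (k - s + r)" by (rule iffD1[OF Pf[OF assms(1)]])
  moreover have "0 < k - s + r" "k - s + r < k" using assms(2,3) by auto
  ultimately show False by (rule dvd_lt_False)
qed

lemma fmodeq: assumes "x \<in> C" "(f^^p) x = (f^^q) x" shows "p mod k = q mod k"
proof -
  have e: "(f^^(p mod k)) x = (f^^(q mod k)) x" using assms fmod by metis
  have "p mod k < k" "q mod k < k" using kpos by auto
  then show ?thesis using flt[OF assms(1)] e
    by (metis linorder_neqE_nat)
qed

lemma agree: assumes "\<And>i. i < j \<Longrightarrow> g ((f^^i) x) = f ((f^^i) x)"
  shows "(g^^j) x = (f^^j) x"
  using assms by (induction j) auto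

lemma half:
  assumes cC: "c \<in> C" and cd: "(c = b1 \<and> d = b2) \<or> (c = b2 \<and> d = b1)"
    and nd: "\<forall>j. (f^^j) c \<noteq> d"
  shows "\<And>j. j < k \<Longrightarrow> (g^^j) (f c) = (f^^j) (f c)" and "(g^^k) (f c) = g c"
proof -
  have A: "(g^^j) (f c) = (f^^j) (f c)" if "j < k" for j
  proof (rule agree)
    fix i assume i: "i < j"
    have e: "(f^^i) (f c) = (f^^(Suc i)) c" by (simp add: funpow_Suc_right del: funpow.simps)
    have inC: "(f^^(Suc i)) c \<in> C" using fclosed cC by blast
    have n1: "(f^^(Suc i)) c \<noteq> d" using nd by blast
    have n2: "(f^^(Suc i)) c \<noteq> c"
    proof
      assume "(f^^(Suc i)) c = c"
      hence "k dvd Suc i" by (rule iffD1[OF Pf[OF cC]])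
      moreover have "Suc i < k" using i that by simp
      ultimately show False by (intro dvd_lt_False[of k "Suc i"]) simp_all
    qed
    have nb: "\<not> ((f^^(Suc i)) c = b1 \<or> (f^^(Suc i)) c = b2)"
      using n1 n2 cd by auto
    have "f ((f^^(Suc i)) c) = g ((f^^(Suc i)) c)"
      using D[OF inC] nb by simp
    thus "g ((f^^i) (f c)) = f ((f^^i) (f c))" unfolding e by simp
  qed
  show "\<And>j. j < k \<Longrightarrow> (g^^j) (f c) = (f^^j) (f c)" using A by blast
  have kk: "k = Suc (k - 1)" using kpos by simp
  have "(g^^k) (f c) = g ((g^^(k-1)) (f c))" by (subst kk) simp
  also have "\<dots> = g ((f^^(k-1)) (f c))" using A kpos by simp
  also have "(f^^(k-1)) (f c) = (f^^k) c" by (subst (2) kk) (simp add: funpow_swap1)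
  also have "\<dots> = c" using Pf[OF cC] by simp
  finally show "(g^^k) (f c) = g c" .
qed

lemma caseB:
  assumes nB: "\<forall>j. (f^^j) b1 \<noteq> b2"
  shows "m = 2 * k \<and> card C \<le> 2 * k"
proof -
  have nB': "\<forall>j. (f^^j) b2 \<noteq> b1"
    using frev[OF b2C] nB by blast
  note H2 = half[OF b2C _ nB'] and H1 = half[OF b1C _ nB]
  have H2a: "\<And>j. j < k \<Longrightarrow> (g^^j) (f b2) = (f^^j) (f b2)" and H2b: "(g^^k) (f b2) = f b1"
    using H2 gb2 b12 by auto
  have H1a: "\<And>j. j < k \<Longrightarrow> (g^^j) (f b1) = (f^^j) (f b1)" and H1b: "(g^^k) (f b1) = f b2"
    using H1 gb1 b12 by auto
  have x0C: "f b2 \<in> C" using fC b2C by blast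
  have y0C: "f b1 \<in> C" using fC b1C by blast
  have gk: "(g^^(j + k)) x = (g^^j) ((g^^k) x)" for j x by (simp add: funpow_add)
  have "(g^^(k + k)) (f b2) = f b2" using gk[of k "f b2"] H2b H1b by simp
  hence mdvd: "m dvd 2 * k" using Pg[OF x0C] by (simp add: mult_2)
  have gm: "(g^^m) (f b2) = f b2" using Pg[OF x0C] by simp
  have "\<not> m < 2 * k"
  proof
    assume lt: "m < 2 * k"
    show False
    proof (cases "m < k")
      case True
      hence "(f^^m) (f b2) = f b2" using H2a gm by simp
      hence "k dvd m" using Pf[OF x0C] by simp
      thus False using True mpos by (intro dvd_lt_False[of k m]) simp_all
    next
      case False
      define j where "j = m - k"
      have j: "m = j + k" "j < k" using lt False unfolding j_def by auto
      have "(g^^m) (f b2) = (g^^j) ((g^^k) (f b2))" unfolding j(1) funpow_add by simp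
      also have "\<dots> = (f^^j) (f b1)" using H2b H1a[OF j(2)] by simp
      also have "\<dots> = f ((f^^j) b1)" by (simp add: funpow_swap1)
      finally have "f ((f^^j) b1) = f b2" using gm by simp
      hence "(f^^j) b1 = b2" using injf fclosed[OF b1C] b2C by (meson inj_on_eq_iff)
      thus False using nB by blast
    qed
  qed
  moreover have "m \<le> 2 * k" using dvd_imp_le[OF mdvd] kpos by simp
  ultimately have m2k: "m = 2 * k" by simp
  define O1 where "O1 = (\<lambda>j. (f^^j) b1) ` {..<k}"
  define O2 where "O2 = (\<lambda>j. (f^^j) b2) ` {..<k}"
  have sub: "C \<subseteq> O1 \<union> O2"
  proof
    fix y assume yC: "y \<in> C"
    show "y \<in> O1 \<union> O2"
    proof (rule ccontr)
      assume ny: "y \<notin> O1 \<union> O2"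
      have inO: "(f^^i) y \<noteq> b" if "b = b1 \<or> b = b2" for i b
      proof
        assume e: "(f^^i) y = b"
        have "(f^^(k - i mod k)) b = y" using frev[OF yC e] .
        hence "(f^^((k - i mod k) mod k)) b = y"
          using fmod that b1C b2C by metis
        moreover have "(k - i mod k) mod k < k" using kpos by simp
        ultimately show False using ny that unfolding O1_def O2_def by blast
      qed
      have "(g^^k) y = (f^^k) y"
      proof (rule agree)
        fix i assume "i < k"
        have "(f^^i) y \<in> C" using fclosed yC by blast
        thus "g ((f^^i) y) = f ((f^^i) y)" using D inO by metis
      qed
      hence "(g^^k) y = y" using Pf[OF yC] by simp
      hence "m dvd k" using Pg[OF yC] by simp
      from dvd_imp_le[OF this kpos] show False using m2k kpos by simp
    qed
  qed
  have "card C \<le> card (O1 \<union> O2)" using sub by (simp add: card_mono O1_def O2_def)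
  also have "\<dots> \<le> card O1 + card O2" by (rule card_Un_le)
  also have "\<dots> \<le> k + k" unfolding O1_def O2_def
    by (metis add_mono card_image_le card_lessThan finite_lessThan)
  finally show ?thesis using m2k by simp
qed

lemma caseA_orbit:
  assumes ex: "(f^^i) b1 = b2"
  shows "\<forall>j. (g^^j) b1 \<noteq> b2"
proof -
  define i' where "i' = i mod k"
  have ei: "(f^^i') b1 = b2" using fmod[OF b1C, of i] ex i'_def by simp
  have i'k: "i' < k" using kpos i'_def by simp
  have i'0: "i' \<noteq> 0"
  proof
    assume "i' = 0"
    with ei have "b1 = b2" by simp
    with b12 show False by simp
  qed
  define S where "S = {(f^^p) b1 | p. i' < p \<and> p \<le> k}"
  have inS: "i' < p \<Longrightarrow> p \<le> k \<Longrightarrow> (f^^p) b1 \<in> S" for p unfolding S_def by blast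
  have memS: "(g^^j) b1 \<in> S" for j
  proof (induction j)
    case 0
    have "(f^^k) b1 = b1" using Pf[OF b1C] by simp
    thus ?case using inS[of k] i'k by simp
  next
    case (Suc j)
    then obtain p where p: "(g^^j) b1 = (f^^p) b1" "i' < p" "p \<le> k" unfolding S_def by blast
    show ?case
    proof (cases "p = k")
      case True
      hence "(g^^j) b1 = b1" using p Pf[OF b1C] by simp
      hence "(g^^Suc j) b1 = f b2" using gb1 by simp
      also have "\<dots> = (f^^(Suc i')) b1" using ei by simp
      finally show ?thesis using inS[of "Suc i'"] i'k by simp
    next
      case False
      have inC: "(f^^p) b1 \<in> C" using fclosed b1C by blast
      have n1: "(f^^p) b1 \<noteq> b1"
      proof
        assume "(f^^p) b1 = b1"
        hence "k dvd p" using Pf[OF b1C] by simp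
        moreover have "0 < p" "p < k" using False p by auto
        ultimately show False by (rule dvd_lt_False)
      qed
      have n2: "(f^^p) b1 \<noteq> b2"
      proof
        assume "(f^^p) b1 = b2"
        hence "(f^^i') b1 = (f^^p) b1" using ei by simp
        thus False using flt[OF b1C, of i' p] p False by simp
      qed
      have "(g^^Suc j) b1 = g ((f^^p) b1)" using p by simp
      also have "\<dots> = f ((f^^p) b1)"
      proof (rule ccontr)
        assume "g ((f^^p) b1) \<noteq> f ((f^^p) b1)"
        hence "f ((f^^p) b1) \<noteq> g ((f^^p) b1)" by simp
        hence "(f^^p) b1 = b1 \<or> (f^^p) b1 = b2" using D[OF inC] by simp
        with n1 n2 show False by simp
      qed
      also have "\<dots> = (f^^(Suc p)) b1" by simp
      finally have eqS: "(g^^Suc j) b1 = (f^^(Suc p)) b1" .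
      have "(f^^(Suc p)) b1 \<in> S" using inS[of "Suc p"] p False by simp
      thus ?thesis unfolding eqS .
    qed
  qed
  have "b2 \<notin> S"
  proof
    assume "b2 \<in> S"
    then obtain p where p: "(f^^p) b1 = b2" "i' < p" "p \<le> k" unfolding S_def by blast
    show False
    proof (cases "p = k")
      case True
      have "(f^^k) b1 = b1" using Pf[OF b1C, of k] by simp
      thus False using p True b12 by simp
    next
      case False
      have "(f^^i') b1 = (f^^p) b1" using p ei by simp
      thus False using flt[OF b1C, of i' p] p False by simp
    qed
  qed
  hence "(g^^j) b1 \<noteq> b2" for j using memS[of j] by auto
  thus ?thesis by simp
qed


end

lemma surj_swap:
  assumes gC: "\<And>x. x \<in> C \<Longrightarrow> g x \<in> C" and injg: "inj_on g C"
    and surjf: "\<And>y. y \<in> C \<Longrightarrow> \<exists>x\<in>C. f x = y"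
    and b1C: "b1 \<in> C" and b2C: "b2 \<in> C"
    and D: "\<And>b. b \<in> C \<Longrightarrow> f b \<noteq> g b \<longleftrightarrow> b = b1 \<or> b = b2"
  shows "g b1 = f b2"
proof -
  obtain y where y: "y \<in> C" "f y = g b1" using surjf gC b1C by blast
  have "f b1 \<noteq> g b1" using D b1C by blast
  hence "y \<noteq> b1" using y by blast
  show ?thesis
  proof (cases "y = b2")
    case True thus ?thesis using y by simp
  next
    case False
    hence "g y = g b1" using D[OF y(1)] y `y \<noteq> b1` by auto
    hence "y = b1" using injg y(1) b1C by (meson inj_on_eq_iff)
    thus ?thesis using `y \<noteq> b1` by blast
  qed
qed

lemma grp_props:
  fixes G :: "'a monoid" (structure) and a :: 'a
  assumes "group G" "finite (carrier G)" "a \<in> carrier G"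
  shows "\<And>x. x \<in> carrier G \<Longrightarrow> (((\<lambda>y. a \<otimes>\<^bsub>G\<^esub> y)^^j) x = x \<longleftrightarrow> group.ord G a dvd j)"
    and "0 < group.ord G a" and "group.ord G a dvd card (carrier G)"
    and "\<And>x. x \<in> carrier G \<Longrightarrow> a \<otimes>\<^bsub>G\<^esub> x \<in> carrier G"
    and "inj_on (\<lambda>y. a \<otimes>\<^bsub>G\<^esub> y) (carrier G)"
    and "\<And>y. y \<in> carrier G \<Longrightarrow> \<exists>x\<in>carrier G. a \<otimes>\<^bsub>G\<^esub> x = y"
proof -
  interpret group G by fact
  have pw: "((\<lambda>y. a \<otimes> y)^^j) x = a [^] j \<otimes> x" if "x \<in> carrier G" for x j
  proof (induction j)
    case 0 thus ?case using that by simp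
  next
    case (Suc j)
    have "((\<lambda>y. a \<otimes> y)^^Suc j) x = a \<otimes> (a [^] j \<otimes> x)" using Suc by simp
    also have "\<dots> = (a \<otimes> a [^] j) \<otimes> x" using that assms(3) by (simp add: m_assoc)
    also have "a \<otimes> a [^] j = a [^] Suc j" using assms(3) by (rule nat_pow_Suc2[symmetric])
    finally show ?case .
  qed
  show "((\<lambda>y. a \<otimes> y)^^j) x = x \<longleftrightarrow> ord a dvd j" if "x \<in> carrier G" for x
  proof -
    have "((\<lambda>y. a \<otimes> y)^^j) x = x \<longleftrightarrow> a [^] j \<otimes> x = x" using pw[OF that] by simp
    also have "\<dots> \<longleftrightarrow> a [^] j = \<one>" by (rule r_cancel_one[OF that nat_pow_closed[OF assms(3)]])
    also have "\<dots> \<longleftrightarrow> ord a dvd j" by (rule pow_eq_id[OF assms(3)])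
    finally show ?thesis .
  qed
  show "0 < ord a" using ord_ge_1[OF assms(2,3)] by simp
  show "ord a dvd card (carrier G)" using ord_dvd_group_order[OF assms(3)] by (simp add: order_def)
  show "\<And>x. x \<in> carrier G \<Longrightarrow> a \<otimes> x \<in> carrier G" using assms(3) by simp
  show "inj_on (\<lambda>y. a \<otimes> y) (carrier G)"
  proof (rule inj_onI)
    fix x y assume "x \<in> carrier G" "y \<in> carrier G" "a \<otimes> x = a \<otimes> y"
    thus "x = y" using assms(3) by simp
  qed
  show "\<exists>x\<in>carrier G. a \<otimes> x = y" if "y \<in> carrier G" for y
  proof (rule bexI[of _ "inv a \<otimes> y"])
    show "inv a \<otimes> y \<in> carrier G" using that assms(3) by simp
    have "a \<otimes> (inv a \<otimes> y) = (a \<otimes> inv a) \<otimes> y" using that assms(3) by (intro m_assoc[symmetric]) simp_all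
    also have "\<dots> = y" using that assms(3) by simp
    finally show "a \<otimes> (inv a \<otimes> y) = y" .
  qed
qed

theorem proposition4p14:
  fixes G1 G2 :: "'a monoid" and a :: 'a and n :: nat
  assumes "group G1" and "group G2"
    and "carrier G2 = carrier G1"
    and "finite (carrier G1)" and "card (carrier G1) = n"
    and "a \<in> carrier G1"
    and "dist_elem G1 G2 a = 2"
  shows "{group.ord G1 a, group.ord G2 a} = {n, n div 2}"
proof -
  define C where "C = carrier G1"
  define f where "f = (\<lambda>y. a \<otimes>\<^bsub>G1\<^esub> y)"
  define g where "g = (\<lambda>y. a \<otimes>\<^bsub>G2\<^esub> y)"
  define k where "k = group.ord G1 a"
  define m where "m = group.ord G2 a"
  note P1 = grp_props[OF assms(1) assms(4) assms(6)]
  have fin2: "finite (carrier G2)" and a2: "a \<in> carrier G2" using assms(3,4,6) by simp_all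
  note P2 = grp_props[OF assms(2) fin2 a2]
  have Pf: "\<And>x j. x \<in> C \<Longrightarrow> (f^^j) x = x \<longleftrightarrow> k dvd j"
    unfolding f_def C_def k_def by (rule P1(1))
  have Pg: "\<And>x j. x \<in> C \<Longrightarrow> (g^^j) x = x \<longleftrightarrow> m dvd j"
    unfolding g_def C_def m_def assms(3)[symmetric] by (rule P2(1))
  have kpos: "0 < k" unfolding k_def by (rule P1(2))
  have mpos: "0 < m" unfolding m_def by (rule P2(2))
  have kdvd: "k dvd n" unfolding k_def using P1(3) assms(5) by simp
  have mdvd: "m dvd n" unfolding m_def using P2(3) assms(3,5) by simp
  have fC: "\<And>x. x \<in> C \<Longrightarrow> f x \<in> C" unfolding f_def C_def by (rule P1(4))
  have gC: "\<And>x. x \<in> C \<Longrightarrow> g x \<in> C" unfolding g_def C_def assms(3)[symmetric] by (rule P2(4))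
  have injf: "inj_on f C" unfolding f_def C_def by (rule P1(5))
  have injg: "inj_on g C" unfolding g_def C_def assms(3)[symmetric] by (rule P2(5))
  have surjf: "\<And>y. y \<in> C \<Longrightarrow> \<exists>x\<in>C. f x = y" unfolding f_def C_def by (rule P1(6))
  have "card {b \<in> C. f b \<noteq> g b} = 2" using assms(7) unfolding dist_elem_def C_def f_def g_def .
  then obtain b1 b2 where b: "b1 \<noteq> b2" "{b \<in> C. f b \<noteq> g b} = {b1, b2}"
    unfolding card_2_iff by blast
  have "b1 \<in> {b \<in> C. f b \<noteq> g b}" "b2 \<in> {b \<in> C. f b \<noteq> g b}" unfolding b(2) by simp_all
  hence b1C: "b1 \<in> C" and b2C: "b2 \<in> C" by simp_all
  have D: "f b \<noteq> g b \<longleftrightarrow> b = b1 \<or> b = b2" if bC: "b \<in> C" for b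
  proof -
    have "b \<in> {b \<in> C. f b \<noteq> g b} \<longleftrightarrow> b \<in> {b1, b2}" by (simp only: b(2))
    thus ?thesis using bC by simp
  qed
  have D': "g b \<noteq> f b \<longleftrightarrow> b = b1 \<or> b = b2" if "b \<in> C" for b using D[OF that] by auto
  have D2: "f b \<noteq> g b \<longleftrightarrow> b = b2 \<or> b = b1" if "b \<in> C" for b using D[OF that] by auto
  have gb1: "g b1 = f b2" by (rule surj_swap[OF gC injg surjf b1C b2C D])
  have gb2: "g b2 = f b1" by (rule surj_swap[OF gC injg surjf b2C b1C D2])
  have finC: "finite C" using assms(4) unfolding C_def .
  have nC: "card C = n" using assms(5) unfolding C_def .
  have "0 < card C" using finC b1C by (auto simp: card_gt_0_iff)
  hence npos: "0 < n" using nC by simp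
  interpret PS: perm_setup C f g k m b1 b2
    by (rule perm_setup.intro[OF finC fC gC injf injg Pf Pg kpos mpos b1C b2C b(1) D gb1 gb2])
  interpret PS': perm_setup C g f m k b1 b2
    by (rule perm_setup.intro[OF finC gC fC injg injf Pg Pf mpos kpos b1C b2C b(1) D' gb2[symmetric] gb1[symmetric]])
  have goal: "{k, m} = {n, n div 2}" 
  proof (cases "\<forall>j. (f^^j) b1 \<noteq> b2")
    case True
    from PS.caseB[OF True] have r: "m = 2 * k" "card C \<le> 2 * k" by simp_all
    have "m \<le> n" using mdvd npos by (rule dvd_imp_le)
    hence nm: "n = m" using r nC by simp
    have "n div 2 = k" using nm r(1) by simp
    hence "{n, n div 2} = {m, k}" using nm by simp
    thus ?thesis by (simp add: insert_commute)
  next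
    case False
    then obtain i where "(f^^i) b1 = b2" by blast
    from PS.caseA_orbit[OF this] have nB: "\<forall>j. (g^^j) b1 \<noteq> b2" .
    from PS'.caseB[OF nB] have r: "k = 2 * m" "card C \<le> 2 * m" by simp_all
    have "k \<le> n" using kdvd npos by (rule dvd_imp_le)
    hence nk: "n = k" using r nC by simp
    have "n div 2 = m" using nk r(1) by simp
    thus ?thesis using nk by simp
  qed
  thus ?thesis unfolding k_def m_def .
qed

end
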